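(* Let $q$ be a prime power, $M\geq 2$ an integer, $n\geq1$, and let $A\in\mathrm{Sp}(2n,q)$ have characteristic polynomial $f$ which is a SRIM polynomial of degree $2n$. Then the equation $\alpha^M=A$ has a solution $\alpha\in\mathrm{Sp}(2n,q)$ if and only if $f$ is an $M^*$-power SRIM polynomial.
   Context: For a monic polynomial $f$ of degree $r$ with $f(0)\neq0$, $f^*(x)=f(0)^{-1}x^rf(x^{-1})$; $f$ is self-reciprocal if $f=f^*$. SRIM means self-reciprocal irreducible monic. A SRIM polynomial $f$ of degree $2k$ ($k\ge1$) is an $M^*$-power SRIM polynomial if $f(x^M)$ has a SRIM factor of degree $2k$. $\mathrm{Sp}(2n,q)$ is the symplectic group of a non-degenerate alternating form on $\mathbb{F}_q^{2n}$. *)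

theory Defs
  imports "Jordan_Normal_Form.Char_Poly" "HOL-Computational_Algebra.Polynomial"
begin

definition recip_poly :: "'a::field poly \<Rightarrow> 'a poly" where
  "recip_poly f = Polynomial.smult (inverse (coeff f 0)) (reflect_poly f)"

definition self_reciprocal :: "'a::field poly \<Rightarrow> bool" where
  "self_reciprocal f \<longleftrightarrow> coeff f 0 \<noteq> 0 \<and> recip_poly f = f"

definition srim :: "'a::field poly \<Rightarrow> bool" where
  "srim f \<longleftrightarrow> monic f \<and> irreducible f \<and> self_reciprocal f"

definition Mstar_power_srim :: "nat \<Rightarrow> 'a::field poly \<Rightarrow> bool" where
  "Mstar_power_srim M f \<longleftrightarrow> srim f \<and> even (degree f) \<and> degree f \<ge> 2 \<and>
     (\<exists>g. srim g \<and> degree g = degree f \<and> g dvd pcompose f (monom 1 M))"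

definition nondeg_alternating :: "nat \<Rightarrow> 'a::field mat \<Rightarrow> bool" where
  "nondeg_alternating m J \<longleftrightarrow> J \<in> carrier_mat m m \<and> transpose_mat J = - J
     \<and> (\<forall>i<m. J $$ (i, i) = 0) \<and> det J \<noteq> 0"

definition Sp_group :: "nat \<Rightarrow> 'a::field mat \<Rightarrow> 'a mat set" where
  "Sp_group m J = {A \<in> carrier_mat m m. transpose_mat A * J * A = J}"

end

theory Submission
  imports Defs "HOL-Computational_Algebra.Polynomial_Factorial"
begin
lemma dvd_diff_trans: "(h::'a::comm_ring_1) dvd a - b \<Longrightarrow> h dvd b - c \<Longrightarrow> h dvd a - c"
  using dvd_add[of h "a-b" "b-c"] by simp

lemma dvd_diff_mult: "(h::'a::comm_ring_1) dvd a - b \<Longrightarrow> h dvd c - d \<Longrightarrow> h dvd a*c - b*d"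
proof -
  assume "h dvd a - b" "h dvd c - d"
  hence "h dvd (a - b) * c + b * (c - d)" by (simp add: dvd_add dvd_mult2 dvd_mult)
  thus ?thesis by (simp add: algebra_simps)
qed

lemma dvd_diff_pow: "(h::'a::comm_ring_1) dvd a - b \<Longrightarrow> h dvd a^k - b^k"
proof (induction k)
  case (Suc k)
  then show ?case using dvd_diff_mult[of h a b "a^k" "b^k"] by simp
qed simp

lemma pcompose_power: "pcompose (p ^ n) q = (pcompose p q) ^ n"
  for p q :: "'a::comm_ring_1 poly"
  by (induct n) (simp_all add: pcompose_mult pcompose_1)

lemma pcompose_monom: "pcompose (monom a k) c = Polynomial.smult a (c ^ k)"
  for c :: "'a::comm_ring_1 poly"
  by (induct k) (simp_all add: monom_Suc pcompose_pCons monom_0 smult_conv_map_poly[symmetric])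

lemma pcompose_cong: "(h::'a::comm_ring_1 poly) dvd a - b \<Longrightarrow> h dvd pcompose u a - pcompose u b"
proof (induction u)
  case 0 then show ?case by simp
next
  case (pCons c u)
  have "h dvd a * pcompose u a - b * pcompose u b" using pCons by (intro dvd_diff_mult)
  then show ?case by (simp add: pcompose_pCons)
qed

lemma pcompose_cong_right:
  fixes h :: "'a::comm_ring_1 poly"
  assumes "h dvd pcompose h t" and "h dvd a - b"
  shows "h dvd pcompose a t - pcompose b t"
proof -
  obtain k where "a - b = h * k" using assms(2) by (auto elim: dvdE)
  then have "pcompose a t - pcompose b t = pcompose h t * pcompose k t"
    by (metis pcompose_diff pcompose_mult)
  then show ?thesis using assms(1) by simp
qed

lemma reflect_pcompose_cong:
  fixes h c d :: "'a::field poly"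
  assumes hcd: "h dvd c * d - 1"
  shows "h dvd c ^ degree P * pcompose P d - pcompose (reflect_poly P) c"
proof (induction P)
  case 0 then show ?case by simp
next
  case (pCons a p)
  show ?case
  proof (cases "p = 0")
    case True then show ?thesis by simp
  next
    case False
    define Y where "Y = c ^ degree p * pcompose p d"
    have deg: "degree (pCons a p) = Suc (degree p)" using False by simp
    have r: "reflect_poly (pCons a p) = reflect_poly p + monom a (Suc (degree p))"
      using False by (rule reflect_poly_pCons')
    have e1: "c ^ degree (pCons a p) * pcompose (pCons a p) d = Polynomial.smult a (c ^ Suc (degree p)) + (c*d) * Y"
      unfolding deg Y_def by (simp add: pcompose_pCons algebra_simps)
    have e2: "pcompose (reflect_poly (pCons a p)) c = pcompose (reflect_poly p) c + Polynomial.smult a (c ^ Suc (degree p))"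
      by (simp add: r pcompose_add pcompose_monom)
    have "h dvd (c * d - 1) * Y + (Y - pcompose (reflect_poly p) c)"
      using hcd pCons(2) unfolding Y_def by (simp add: dvd_add dvd_mult2)
    then show ?thesis unfolding e1 e2 by (simp add: algebra_simps)
  qed
qed

lemma irreducible_degree_pos:
  fixes f :: "'a::field poly"
  assumes "irreducible f" shows "degree f \<ge> 1"
proof -
  have "f \<noteq> 0" "\<not> is_unit f" using assms by (auto simp: irreducible_def)
  then show ?thesis using is_unit_iff_degree by fastforce
qed

lemma self_recip_root:
  fixes h t :: "'a::field poly"
  assumes irr: "irreducible h" and deg: "degree h \<ge> 2" and sr: "self_reciprocal h"
    and t: "h dvd t * [:0,1:] - 1"
  shows "h dvd pcompose h t"
proof -
  have pr: "prime_elem h" using irr by (rule field_poly_irreducible_imp_prime)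
  have h0: "coeff h 0 \<noteq> 0" and rh: "recip_poly h = h" using sr by (auto simp: self_reciprocal_def)
  have refl: "reflect_poly h = Polynomial.smult (coeff h 0) h"
  proof -
    have "Polynomial.smult (coeff h 0) (recip_poly h) = reflect_poly h"
      using h0 by (simp add: recip_poly_def)
    then show ?thesis using rh by simp
  qed
  have "h dvd [:0,1:] * t - 1" using t by (simp add: mult.commute)
  from reflect_pcompose_cong[OF this, of h]
  have d1: "h dvd [:0,1:] ^ degree h * pcompose h t - Polynomial.smult (coeff h 0) h" by (simp add: refl)
  have d2: "h dvd Polynomial.smult (coeff h 0) h" by (rule dvd_smult) simp
  have "h dvd [:0,1:] ^ degree h * pcompose h t" using dvd_add[OF d1 d2] by simp
  moreover have "\<not> h dvd [:0,1:] ^ degree h"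
  proof
    assume "h dvd [:0,1:] ^ degree h"
    then have "h dvd [:0,1:]" using pr prime_elem_dvd_power by blast
    then have "degree h \<le> degree [:0,1::'a:]" by (rule dvd_imp_degree_le) simp
    then have "degree h \<le> 1" by simp
    then show False using deg by simp
  qed
  ultimately show ?thesis using pr prime_elem_dvd_mult_iff by blast
qed

lemma finite_deg_less: "finite {p :: 'a::{finite,zero} poly. degree p < d}"
proof -
  have "{p :: 'a poly. degree p < d} \<subseteq> Poly ` {xs. set xs \<subseteq> UNIV \<and> length xs \<le> d}"
  proof
    fix p :: "'a poly" assume "p \<in> {p. degree p < d}"
    then have "length (coeffs p) \<le> d" by (cases "p = 0") (auto simp: length_coeffs)
    then show "p \<in> Poly ` {xs. set xs \<subseteq> UNIV \<and> length xs \<le> d}"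
      by (intro image_eqI[of _ _ "coeffs p"]) auto
  qed
  then show ?thesis by (rule finite_subset) (intro finite_imageI finite_lists_length_le finite_UNIV)
qed

lemma eq_of_dvd_deg:
  fixes f p q :: "'a::field poly"
  assumes "f dvd p - q" "degree p < degree f" "degree q < degree f"
  shows "p = q"
proof (rule ccontr)
  assume "p \<noteq> q"
  then have pq: "p - q \<noteq> 0" by simp
  have "degree f \<le> degree (p - q)" by (rule dvd_imp_degree_le[OF assms(1) pq])
  moreover have "degree (p - q) < degree f" using assms(2,3) by (rule degree_diff_less)
  ultimately show False by simp
qed

lemma mod_deg_less:
  fixes f p :: "'a::field poly"
  assumes "degree f \<ge> 1" shows "degree (p mod f) < degree f"
  using assms degree_mod_less[of f p] by (cases "f = 0") auto

lemma dvd_mod_diff: "(f::'a::field poly) dvd p mod f - p"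
  by (metis mod_eq_dvd_iff mod_mod_trivial)

lemma inv_mod_irreducible:
  fixes f P :: "'a::{finite,field} poly"
  assumes irr: "irreducible f" and nd: "\<not> f dvd P"
  shows "\<exists>u. f dvd u * P - 1"
proof -
  have pr: "prime_elem f" using irr by (rule field_poly_irreducible_imp_prime)
  have degf: "degree f \<ge> 1" using irr by (rule irreducible_degree_pos)
  define S where "S = {p :: 'a poly. degree p < degree f}"
  define \<phi> where "\<phi> = (\<lambda>u. (u * P) mod f)"
  have fin: "finite S" unfolding S_def by (rule finite_deg_less)
  have sub: "\<phi> ` S \<subseteq> S" using mod_deg_less[OF degf] unfolding S_def \<phi>_def by auto
  have inj: "inj_on \<phi> S"
  proof (rule inj_onI)
    fix u v assume uv: "u \<in> S" "v \<in> S" "\<phi> u = \<phi> v"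
    then have "f dvd u * P - v * P" unfolding \<phi>_def by (simp add: mod_eq_dvd_iff)
    then have "f dvd (u - v) * P" by (simp add: algebra_simps)
    then have "f dvd u - v" using pr nd by (simp add: prime_elem_dvd_mult_iff)
    then show "u = v" using uv eq_of_dvd_deg unfolding S_def by blast
  qed
  have "\<phi> ` S = S" using fin sub inj by (rule endo_inj_surj)
  moreover have "1 \<in> S" using degf unfolding S_def by simp
  ultimately obtain u where "u \<in> S" "\<phi> u = 1" by (metis imageE)
  then have "(u * P) mod f = 1 mod f" unfolding \<phi>_def using degf by (simp add: mod_poly_less)
  then show ?thesis by (auto simp: mod_eq_dvd_iff)
qed

lemma inv_X:
  fixes h :: "'a::field poly"
  assumes "coeff h 0 \<noteq> 0"
  shows "\<exists>t. h dvd t * [:0,1:] - 1"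
proof -
  obtain a p where h: "h = pCons a p" by (cases h) auto
  then have a: "a \<noteq> 0" using assms by simp
  define t where "t = Polynomial.smult (- inverse a) p"
  have "t * [:0,1:] - 1 = Polynomial.smult (- inverse a) h"
    unfolding t_def h using a
    by (simp add: poly_eq_iff coeff_pCons split: nat.split)
  then show ?thesis by (intro exI[of _ t]) (simp add: dvd_smult)
qed

lemma monic_dvd_eq:
  fixes a b :: "'a::field poly"
  assumes "monic a" "monic b" "degree a = degree b" "a dvd b"
  shows "a = b"
proof -
  obtain k where k: "b = a * k" using assms(4) unfolding dvd_def by blast
  have a0: "a \<noteq> 0" and b0: "b \<noteq> 0" using assms by auto
  then have k0: "k \<noteq> 0" using k by auto
  have "degree k = 0" using k degree_mult_eq[OF a0 k0] assms(3) by simp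
  moreover have "lead_coeff k = 1" using k assms(1,2) by (simp add: lead_coeff_mult)
  ultimately have "k = 1"
    by (intro poly_eqI) (auto simp: coeff_eq_0)
  then show ?thesis using k by simp
qed

lemma dvd_pcompose_of_dvd:
  fixes f g P q :: "'a::comm_ring_1 poly"
  assumes "f dvd P" "g dvd pcompose f q"
  shows "g dvd pcompose P q"
proof -
  obtain k where "P = f * k" using assms(1) unfolding dvd_def by blast
  then have "pcompose P q = pcompose f q * pcompose k q" by (simp add: pcompose_mult)
  then show ?thesis using assms(2) by simp
qed

lemma backward_poly:
  fixes f g s :: "'a::{finite,field} poly"
  assumes firr: "irreducible f" and degf: "degree f = m"
    and girr: "irreducible g" and degg: "degree g = m" and m2: "m \<ge> 2" and gsr: "self_reciprocal g"
    and gdvd: "g dvd pcompose f (monom 1 M)"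
    and s: "f dvd s * [:0,1:] - 1"
  shows "\<exists>r. f dvd r ^ M - [:0,1:] \<and> f dvd pcompose r s * r - 1"
proof -
  let ?X = "[:0,1:] :: 'a poly"
  let ?XM = "monom 1 M :: 'a poly"
  have XM: "?XM = ?X ^ M" by (simp add: monom_altdef)
  have g0: "g \<noteq> 0" and gn1: "\<not> g dvd 1" using girr by (auto simp: irreducible_def)
  have transp: "f dvd P" if "g dvd pcompose P ?XM" for P
  proof (rule ccontr)
    assume "\<not> f dvd P"
    then obtain u where "f dvd u * P - 1" using inv_mod_irreducible firr by blast
    then have "g dvd pcompose (u * P - 1) ?XM" using gdvd by (rule dvd_pcompose_of_dvd)
    then have d1: "g dvd pcompose u ?XM * pcompose P ?XM - 1" by (simp add: pcompose_diff pcompose_mult pcompose_1)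
    have d2: "g dvd pcompose u ?XM * pcompose P ?XM" using that by simp
    have "g dvd pcompose u ?XM * pcompose P ?XM - (pcompose u ?XM * pcompose P ?XM - 1)"
      using dvd_diff[OF d2 d1] .
    then show False using gn1 by simp
  qed
  define S where "S = {p :: 'a poly. degree p < m}"
  define \<psi> where "\<psi> = (\<lambda>p. pcompose p ?XM mod g)"
  have degg1: "degree g \<ge> 1" using degg m2 by simp
  have fin: "finite S" unfolding S_def by (rule finite_deg_less)
  have sub: "\<psi> ` S \<subseteq> S" using mod_deg_less[OF degg1] degg unfolding S_def \<psi>_def by auto
  have inj: "inj_on \<psi> S"
  proof (rule inj_onI)
    fix u v assume uv: "u \<in> S" "v \<in> S" "\<psi> u = \<psi> v"
    then have "g dvd pcompose u ?XM - pcompose v ?XM" unfolding \<psi>_def by (simp add: mod_eq_dvd_iff)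
    then have "g dvd pcompose (u - v) ?XM" by (simp add: pcompose_diff)
    then have "f dvd u - v" by (rule transp)
    then show "u = v" using uv eq_of_dvd_deg degf unfolding S_def by blast
  qed
  have surj: "\<psi> ` S = S" using fin sub inj by (rule endo_inj_surj)
  have "?X \<in> S" using m2 unfolding S_def by simp
  then obtain r where rS: "r \<in> S" and r: "\<psi> r = ?X" using surj by (metis imageE)
  have rX: "g dvd pcompose r ?XM - ?X"
  proof -
    have "pcompose r ?XM mod g = ?X mod g" using r degg m2 unfolding \<psi>_def by (simp add: mod_poly_less)
    then show ?thesis by (simp add: mod_eq_dvd_iff)
  qed
  have c1: "f dvd r ^ M - ?X"
  proof (rule transp)
    have "g dvd (pcompose r ?XM) ^ M - ?X ^ M" using rX by (rule dvd_diff_pow)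
    then show "g dvd pcompose (r ^ M - ?X) ?XM" by (simp add: pcompose_diff pcompose_power XM pcompose_pCons)
  qed
  have "coeff g 0 \<noteq> 0" using gsr by (simp add: self_reciprocal_def)
  then obtain t where t: "g dvd t * ?X - 1" using inv_X by blast
  have gt: "g dvd pcompose g t" using girr degg m2 gsr t by (intro self_recip_root) auto
  define a where "a = pcompose s ?XM"
  define b where "b = t ^ M"
  have ac: "g dvd a * ?XM - 1"
  proof -
    have "g dvd pcompose (s * ?X - 1) ?XM" using s gdvd by (rule dvd_pcompose_of_dvd)
    then show ?thesis unfolding a_def by (simp add: pcompose_diff pcompose_mult pcompose_pCons mult.commute)
  qed
  have bc: "g dvd b * ?XM - 1"
  proof -
    have "g dvd (t * ?X) ^ M - 1 ^ M" using t by (rule dvd_diff_pow)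
    then show ?thesis unfolding b_def XM by (simp only: power_mult_distrib power_one)
  qed
  have ab: "g dvd a - b"
  proof -
    have "g dvd b * (a * ?XM - 1) - a * (b * ?XM - 1)" using ac bc by (simp add: dvd_diff dvd_mult)
    moreover have "b * (a * ?XM - 1) - a * (b * ?XM - 1) = a - b" by (simp add: algebra_simps)
    ultimately show ?thesis by simp
  qed
  have ra: "g dvd pcompose r a - pcompose r b" using ab by (rule pcompose_cong)
  have rb: "pcompose r b = pcompose (pcompose r ?XM) t"
    unfolding b_def by (simp add: pcompose_assoc[symmetric] XM pcompose_power pcompose_pCons)
  have rbt: "g dvd pcompose (pcompose r ?XM) t - t"
  proof -
    have "g dvd pcompose (pcompose r ?XM) t - pcompose ?X t" using gt rX by (rule pcompose_cong_right)
    then show ?thesis by (simp add: pcompose_pCons)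
  qed
  have rat: "g dvd pcompose r a - t" using dvd_diff_trans[OF ra] rbt rb by simp
  have "g dvd pcompose r a * pcompose r ?XM - t * ?X" using rat rX by (rule dvd_diff_mult)
  then have "g dvd pcompose r a * pcompose r ?XM - 1" using t by (rule dvd_diff_trans)
  then have c2: "f dvd pcompose r s * r - 1"
    by (intro transp) (simp add: pcompose_diff pcompose_mult pcompose_1 pcompose_assoc[symmetric] a_def)
  show ?thesis using c1 c2 by blast
qed

lemma forward_poly:
  fixes f g s r :: "'a::{finite,field} poly"
  assumes firr: "irreducible f" and degf: "degree f = m" and m2: "m \<ge> 2" and fsr: "self_reciprocal f"
    and s: "f dvd s * [:0,1:] - 1"
    and rM: "f dvd r ^ M - [:0,1:]" and rs: "f dvd pcompose r s * r - 1"
    and gm: "monic g" and degg: "degree g = m" and gr: "f dvd pcompose g r"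
  shows "srim g \<and> g dvd pcompose f (monom 1 M)"
proof -
  let ?X = "[:0,1:] :: 'a poly"
  let ?XM = "monom 1 M :: 'a poly"
  have XM: "?XM = ?X ^ M" by (simp add: monom_altdef)
  have pr: "prime_elem f" using firr by (rule field_poly_irreducible_imp_prime)
  have g0: "g \<noteq> 0" using gm by auto
  have degf1: "degree f \<ge> 1" using degf m2 by simp
  have degg1: "degree g \<ge> 1" using degg m2 by simp
  have XMr: "pcompose ?XM r = r ^ M" by (simp add: XM pcompose_power pcompose_pCons)
  have bckw: "f dvd pcompose u (r ^ M) - u" for u
    using pcompose_cong[OF rM, of u] by simp
  define S where "S = {p :: 'a poly. degree p < m}"
  define \<psi> where "\<psi> = (\<lambda>p. pcompose p r mod f)"
  have fin: "finite S" unfolding S_def by (rule finite_deg_less)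
  have sub: "\<psi> ` S \<subseteq> S" using mod_deg_less[OF degf1] degf unfolding S_def \<psi>_def by auto
  have sup: "S \<subseteq> \<psi> ` S"
  proof
    fix u assume uS: "u \<in> S"
    define w where "w = pcompose u ?XM mod g"
    have wS: "w \<in> S" using mod_deg_less[OF degg1] degg unfolding S_def w_def by auto
    have "g dvd w - pcompose u ?XM" unfolding w_def by (rule dvd_mod_diff)
    then have "f dvd pcompose (w - pcompose u ?XM) r" using gr by (rule dvd_pcompose_of_dvd)
    then have "f dvd pcompose w r - pcompose u (r ^ M)"
      by (simp add: pcompose_diff pcompose_assoc[symmetric] XMr)
    then have "f dvd pcompose w r - u" using bckw by (rule dvd_diff_trans)
    then have "\<psi> w = u mod f" unfolding \<psi>_def by (simp add: mod_eq_dvd_iff)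
    also have "\<dots> = u" using uS degf unfolding S_def by (simp add: mod_poly_less)
    finally show "u \<in> \<psi> ` S" using wS by blast
  qed
  have img: "\<psi> ` S = S" using sub sup by blast
  have inj: "inj_on \<psi> S" using fin img by (intro eq_card_imp_inj_on) auto
  have kernel: "g dvd P" if "f dvd pcompose P r" for P
  proof -
    define w where "w = P mod g"
    have wS: "w \<in> S" using mod_deg_less[OF degg1] degg unfolding S_def w_def by auto
    have "g dvd w - P" unfolding w_def by (rule dvd_mod_diff)
    then have "f dvd pcompose (w - P) r" using gr by (rule dvd_pcompose_of_dvd)
    then have "f dvd pcompose w r - pcompose P r" by (simp add: pcompose_diff)
    then have "f dvd pcompose w r" using dvd_add[OF _ that] by (metis diff_add_cancel)
    then have "\<psi> w = \<psi> 0" unfolding \<psi>_def by simp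
    moreover have "0 \<in> S" using m2 unfolding S_def by simp
    ultimately have "w = 0" using inj wS inj_onD by metis
    then show ?thesis unfolding w_def by (simp add: mod_eq_0_iff_dvd)
  qed
  have gf: "g dvd pcompose f ?XM"
  proof (rule kernel)
    have "f dvd pcompose f (r ^ M) - f" by (rule bckw)
    then have "f dvd pcompose f (r ^ M)" using dvd_add[of f "pcompose f (r ^ M) - f" f] by simp
    then show "f dvd pcompose (pcompose f ?XM) r" by (simp add: pcompose_assoc[symmetric] XMr)
  qed
  have girr: "irreducible g"
  proof (rule irreducibleI)
    show "g \<noteq> 0" by (rule g0)
    show "\<not> is_unit g" using g0 degg m2 is_unit_iff_degree by auto
  next
    fix a b assume ab: "g = a * b"
    then have a0: "a \<noteq> 0" and b0: "b \<noteq> 0" using g0 by auto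
    have dsum: "degree g = degree a + degree b" using ab degree_mult_eq[OF a0 b0] by simp
    have "f dvd pcompose a r * pcompose b r" using gr ab by (simp add: pcompose_mult)
    then have "f dvd pcompose a r \<or> f dvd pcompose b r" using pr prime_elem_dvd_mult_iff by blast
    then have "g dvd a \<or> g dvd b" using kernel by blast
    then have "degree g \<le> degree a \<or> degree g \<le> degree b" using a0 b0 dvd_imp_degree_le by blast
    then have "degree b = 0 \<or> degree a = 0" using dsum by auto
    then show "is_unit a \<or> is_unit b" using a0 b0 is_unit_iff_degree by blast
  qed
  have g00: "coeff g 0 \<noteq> 0"
  proof
    assume "coeff g 0 = 0"
    then have "poly g 0 = 0" by (simp add: poly_0_coeff_0)
    then have "[:-0,1:] dvd g" by (simp only: dvd_iff_poly_eq_0 minus_minus minus_zero)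
    then obtain k where k: "g = ?X * k" unfolding dvd_def by auto
    then have "is_unit ?X \<or> is_unit k" using girr irreducibleD by blast
    moreover have "\<not> is_unit ?X" using is_unit_iff_degree[of ?X] by simp
    ultimately have "is_unit k" by blast
    then have "degree k = 0" using is_unit_iff_degree[of k] by fastforce
    moreover have "k \<noteq> 0" using k g0 by auto
    ultimately have "degree g = 1" using k degree_mult_eq[of ?X k] by simp
    then show False using degg m2 by simp
  qed
  have "coeff f 0 \<noteq> 0" using fsr by (simp add: self_reciprocal_def)
  have ffs: "f dvd pcompose f s" using firr degf m2 fsr s by (intro self_recip_root) auto
  define r' where "r' = pcompose r s"
  have rr': "f dvd r * r' - 1" using rs unfolding r'_def by (simp add: mult.commute)
  have d1: "f dvd r ^ degree g * pcompose g r' - pcompose (reflect_poly g) r"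
    using rr' by (rule reflect_pcompose_cong)
  have d2: "f dvd pcompose g r'"
  proof -
    have "f dvd pcompose (pcompose g r) s - pcompose 0 s" using ffs by (rule pcompose_cong_right) (simp add: gr)
    then show ?thesis unfolding r'_def by (simp add: pcompose_assoc)
  qed
  have d3: "f dvd r ^ degree g * pcompose g r'" using d2 by (rule dvd_mult)
  have "f dvd r ^ degree g * pcompose g r' - (r ^ degree g * pcompose g r' - pcompose (reflect_poly g) r)"
    using d3 d1 by (rule dvd_diff)
  then have "f dvd pcompose (reflect_poly g) r" by simp
  then have "f dvd pcompose (recip_poly g) r"
    by (simp add: recip_poly_def pcompose_smult dvd_smult)
  then have gdr: "g dvd recip_poly g" by (rule kernel)
  have degr: "degree (recip_poly g) = degree g" using g00 by (simp add: recip_poly_def)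
  have "lead_coeff (reflect_poly g) = coeff g 0" using g00
    by (simp add: coeff_reflect_poly)
  then have mr: "monic (recip_poly g)" using g00 degr by (simp add: recip_poly_def)
  have "g = recip_poly g" using gm mr degr[symmetric] gdr by (rule monic_dvd_eq)
  then have "self_reciprocal g" using g00 by (simp add: self_reciprocal_def)
  then show ?thesis using gm girr gf by (simp add: srim_def)
qed

definition mev :: "'a::field poly \<Rightarrow> 'a mat \<Rightarrow> 'a mat" where
  "mev p A = fold_coeffs (\<lambda>a B. a \<cdot>\<^sub>m 1\<^sub>m (dim_row A) + A * B) p (0\<^sub>m (dim_row A) (dim_row A))"

lemma mev_0: "A \<in> carrier_mat k k \<Longrightarrow> mev 0 A = 0\<^sub>m k k"
  by (simp add: mev_def)

lemma mev_0'[simp]: "mev 0 A = 0\<^sub>m (dim_row A) (dim_row A)"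
  by (simp add: mev_def)

lemma mev_pCons_gen: "mev (pCons a p) A = (if a = 0 \<and> p = 0 then 0\<^sub>m (dim_row A) (dim_row A)
   else a \<cdot>\<^sub>m 1\<^sub>m (dim_row A) + A * mev p A)"
  by (auto simp: mev_def fold_coeffs_pCons_coeff_not_0_eq fold_coeffs_pCons_not_0_0_eq)

lemma dim_mev[simp]: "dim_row (mev p A) = dim_row A" "dim_col (mev p A) = dim_row A"
proof (induction p)
  case 0 show "dim_row (mev 0 A) = dim_row A" "dim_col (mev 0 A) = dim_row A" by simp_all
next
  case (pCons a p)
  show "dim_row (mev (pCons a p) A) = dim_row A" "dim_col (mev (pCons a p) A) = dim_row A"
    using pCons.IH by (auto simp: mev_pCons_gen)
qed

lemma mev_pCons:
  assumes A: "A \<in> carrier_mat k k"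
  shows "mev (pCons a p) A = a \<cdot>\<^sub>m 1\<^sub>m k + A * mev p A"
proof (cases "a = 0 \<and> p = 0")
  case True
  then show ?thesis using A by (intro eq_matI) (auto simp: mev_def)
next
  case False
  then show ?thesis using A
    by (auto simp: mev_def fold_coeffs_pCons_coeff_not_0_eq fold_coeffs_pCons_not_0_0_eq)
qed

lemma mev_carrier[simp]: "A \<in> carrier_mat k k \<Longrightarrow> mev p A \<in> carrier_mat k k"
proof (induction p)
  case 0 then show ?case by (simp add: mev_0)
next
  case (pCons a p) then show ?case by (simp add: mev_pCons)
qed

lemma mev_add: assumes A: "A \<in> carrier_mat k k"
  shows "mev (p + q) A = mev p A + mev q A"
proof (induction p arbitrary: q)
  case 0 then show ?case using A by (simp add: mev_0)
next
  case (pCons a p)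
  obtain b q' where q: "q = pCons b q'" by (cases q) auto
  have "mev (pCons a p + q) A = (a + b) \<cdot>\<^sub>m 1\<^sub>m k + (A * mev p A + A * mev q' A)"
    using A by (simp add: q mev_pCons pCons.IH mult_add_distrib_mat[OF A mev_carrier[OF A] mev_carrier[OF A]])
  also have "\<dots> = mev (pCons a p) A + mev q A"
    using A by (simp add: q mev_pCons) (intro eq_matI; simp add: algebra_simps)
  finally show ?case .
qed

lemma mev_smult: assumes A: "A \<in> carrier_mat k k"
  shows "mev (Polynomial.smult c p) A = c \<cdot>\<^sub>m mev p A"
proof (induction p)
  case 0 then show ?case using A by (simp add: mev_0)
next
  case (pCons a p)
  have "mev (Polynomial.smult c (pCons a p)) A = (c * a) \<cdot>\<^sub>m 1\<^sub>m k + c \<cdot>\<^sub>m (A * mev p A)"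
    using A by (simp add: mev_pCons pCons.IH mult_smult_distrib[OF A mev_carrier[OF A]])
  also have "\<dots> = c \<cdot>\<^sub>m mev (pCons a p) A"
    using A by (simp add: mev_pCons) (intro eq_matI; simp add: algebra_simps)
  finally show ?case .
qed

lemma mev_const: assumes A: "A \<in> carrier_mat k k" shows "mev [:c:] A = c \<cdot>\<^sub>m 1\<^sub>m k"
  using A by (simp add: mev_pCons mev_0)

lemma mev_1: assumes A: "A \<in> carrier_mat k k" shows "mev 1 A = 1\<^sub>m k"
  using A by (simp add: one_pCons mev_const) (intro eq_matI; simp)

lemma mev_X: assumes A: "A \<in> carrier_mat k k" shows "mev [:0,1:] A = A"
proof -
  have "mev [:0,1:] A = 0 \<cdot>\<^sub>m 1\<^sub>m k + A * (1 \<cdot>\<^sub>m 1\<^sub>m k)" using A by (simp add: mev_pCons mev_const)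
  also have "\<dots> = A" using A by (intro eq_matI) auto
  finally show ?thesis .
qed

lemma mev_mult: assumes A: "A \<in> carrier_mat k k"
  shows "mev (p * q) A = mev p A * mev q A"
proof (induction p)
  case 0 then show ?case using A by (simp add: mev_0)
next
  case (pCons a p)
  have Q: "mev q A \<in> carrier_mat k k" "mev p A \<in> carrier_mat k k" using A by auto
  have "mev (pCons a p * q) A = a \<cdot>\<^sub>m mev q A + (0 \<cdot>\<^sub>m 1\<^sub>m k + A * (mev p A * mev q A))"
    using A by (simp add: mev_add mev_smult mev_pCons pCons.IH)
  also have "\<dots> = a \<cdot>\<^sub>m mev q A + A * (mev p A * mev q A)"
    using A Q by (intro eq_matI) auto
  also have "\<dots> = a \<cdot>\<^sub>m mev q A + A * mev p A * mev q A"
    using assoc_mult_mat[OF A Q(2) Q(1)] by simp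
  also have "\<dots> = (a \<cdot>\<^sub>m 1\<^sub>m k) * mev q A + A * mev p A * mev q A"
    using mult_smult_assoc_mat[OF one_carrier_mat[of k] Q(1), of a] left_mult_one_mat[OF Q(1)] by simp
  also have "\<dots> = (a \<cdot>\<^sub>m 1\<^sub>m k + A * mev p A) * mev q A"
    by (rule add_mult_distrib_mat[symmetric]) (use A Q in auto)
  finally show ?case using A by (simp add: mev_pCons)
qed

lemma mev_diff: assumes A: "A \<in> carrier_mat k k"
  shows "mev (p - q) A = mev p A - mev q A"
proof -
  have "mev p A = mev (p - q) A + mev q A" using mev_add[OF A, of "p - q" q] by simp
  then show ?thesis using A by (intro eq_matI) auto
qed

lemma mev_power: assumes A: "A \<in> carrier_mat k k"
  shows "mev (p ^ n) A = mev p A ^\<^sub>m n"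
proof (induction n)
  case 0 then show ?case using A by (simp add: mev_1)
next
  case (Suc n)
  have "mev (p ^ Suc n) A = mev (p ^ n) A * mev p A" by (simp only: power_Suc2 mev_mult[OF A])
  then show ?case using Suc.IH by simp
qed

lemma mev_pcompose: assumes A: "A \<in> carrier_mat k k"
  shows "mev (pcompose p q) A = mev p (mev q A)"
proof (induction p)
  case 0 then show ?case using A by (simp add: mev_0)
next
  case (pCons a p)
  have B: "mev q A \<in> carrier_mat k k" using A by simp
  show ?case using A B by (simp add: pcompose_pCons mev_add mev_mult mev_const mev_pCons[OF A] mev_pCons[OF B] pCons.IH)
qed

lemma mev_comm: assumes A: "A \<in> carrier_mat k k"
  shows "mev p A * mev q A = mev q A * mev p A"
  using A by (simp add: mev_mult[symmetric] mult.commute)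

lemma mev_transpose: assumes A: "A \<in> carrier_mat k k"
  shows "transpose_mat (mev p A) = mev p (transpose_mat A)"
proof (induction p)
  case 0 then show ?case using A by (simp add: mev_0)
next
  case (pCons a p)
  have P: "mev p A \<in> carrier_mat k k" using A by simp
  have c: "A * mev p A = mev p A * A" using mev_comm[OF A, of "[:0,1:]" p] A by (simp add: mev_X)
  have "transpose_mat (mev (pCons a p) A) = a \<cdot>\<^sub>m 1\<^sub>m k + transpose_mat (A * mev p A)"
    using A P by (simp add: mev_pCons) (intro eq_matI; simp)
  also have "transpose_mat (A * mev p A) = transpose_mat A * mev p (transpose_mat A)"
    using A P by (simp add: c transpose_mult[of _ k k] pCons.IH)
  finally show ?case using A by (simp add: mev_pCons)
qed

lemma mev_intertwine:
  assumes B: "B \<in> carrier_mat k k" and C: "C \<in> carrier_mat k k" and J: "J \<in> carrier_mat k k"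
    and BJ: "B * J = J * C"
  shows "mev p B * J = J * mev p C"
proof (induction p)
  case 0 then show ?case using B C J by (simp add: mev_0)
next
  case (pCons a p)
  have P: "mev p B \<in> carrier_mat k k" "mev p C \<in> carrier_mat k k" using B C by auto
  have e1: "(a \<cdot>\<^sub>m 1\<^sub>m k) * J = a \<cdot>\<^sub>m J"
    using mult_smult_assoc_mat[OF one_carrier_mat[of k] J, of a] J by simp
  have e2: "(B * mev p B) * J = B * (mev p B * J)" by (rule assoc_mult_mat[OF B P(1) J])
  have "mev (pCons a p) B * J = (a \<cdot>\<^sub>m 1\<^sub>m k) * J + (B * mev p B) * J"
    using B J P by (simp add: mev_pCons[OF B]) (rule add_mult_distrib_mat, auto)
  also have "\<dots> = a \<cdot>\<^sub>m J + B * (mev p B * J)" by (simp only: e1 e2)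
  also have "\<dots> = a \<cdot>\<^sub>m J + (B * J) * mev p C" using B J P by (simp add: pCons.IH)
  also have "\<dots> = a \<cdot>\<^sub>m J + J * (C * mev p C)" using assoc_mult_mat[OF J C P(2)] by (simp add: BJ)
  also have "\<dots> = J * (a \<cdot>\<^sub>m 1\<^sub>m k) + J * (C * mev p C)"
    using mult_smult_distrib[OF J one_carrier_mat[of k], of a] right_mult_one_mat[OF J] by simp
  also have "\<dots> = J * (a \<cdot>\<^sub>m 1\<^sub>m k + C * mev p C)"
    by (rule mult_add_distrib_mat[symmetric]) (use J C P in auto)
  also have "\<dots> = J * mev (pCons a p) C" by (simp add: mev_pCons[OF C])
  finally show ?case .
qed

lemma mev_dvd_eq:
  assumes A: "A \<in> carrier_mat k k" and f: "mev f A = 0\<^sub>m k k" and d: "f dvd p - q"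
  shows "mev p A = mev q A"
proof -
  obtain h where "p - q = f * h" using d unfolding dvd_def by blast
  then have "p = q + f * h" by (simp add: algebra_simps)
  then have "mev p A = mev q A + 0\<^sub>m k k * mev h A" using A f by (simp add: mev_add mev_mult)
  then show ?thesis using A by simp
qed

lemma mev_kernel:
  fixes f P :: "'a::{finite,field} poly"
  assumes A: "A \<in> carrier_mat k k" and k: "k > 0" and firr: "irreducible f"
    and f: "mev f A = 0\<^sub>m k k" and P: "mev P A = mev Q A"
  shows "f dvd P - Q"
proof (rule ccontr)
  assume "\<not> f dvd P - Q"
  then obtain u where "f dvd u * (P - Q) - 1" using inv_mod_irreducible firr by blast
  then have "mev (u * (P - Q)) A = mev 1 A" by (rule mev_dvd_eq[OF A f])
  moreover have "mev (P - Q) A = 0\<^sub>m k k" using A P by (simp add: mev_diff)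
  ultimately have "0\<^sub>m k k = (1\<^sub>m k :: 'a mat)" using A by (simp add: mev_mult mev_1)
  then have "(0\<^sub>m k k :: 'a mat) $$ (0,0) = 1\<^sub>m k $$ (0,0)" by simp
  then show False using k by simp
qed

lemma mat_diff_eq:
  fixes X Y Z :: "'a::ab_group_add mat"
  assumes "X \<in> carrier_mat k k" "Y \<in> carrier_mat k k" "X - Y = Z"
  shows "X = Z + Y"
  using assms by (auto intro!: eq_matI)

lemma CH_aux:
  fixes A :: "'a::field mat"
  assumes A: "A \<in> carrier_mat k k"
  shows "(\<And>i. B i \<in> carrier_mat k k) \<Longrightarrow> E \<in> carrier_mat k k \<Longrightarrow> (\<And>i. i \<ge> N \<Longrightarrow> B i = 0\<^sub>m k k) \<Longrightarrow>
    (\<And>i. (if i = 0 then E else B (i - 1)) - A * B i = coeff p i \<cdot>\<^sub>m 1\<^sub>m k) \<Longrightarrow> mev p A = E"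
proof (induction p arbitrary: B E)
  case 0
  note pr = "0.prems"
  have Bz: "\<forall>i. N - d \<le> i \<longrightarrow> B i = 0\<^sub>m k k" for d
  proof (induction d)
    case 0 then show ?case using pr(3) by auto
  next
    case (Suc d)
    show ?case
    proof (intro allI impI)
      fix i assume i: "N - Suc d \<le> i"
      show "B i = 0\<^sub>m k k"
      proof (cases "N - d \<le> i")
        case True then show ?thesis using Suc.IH by auto
      next
        case False
        then have "N - d \<le> Suc i" using i by auto
        then have z: "B (Suc i) = 0\<^sub>m k k" using Suc.IH by auto
        have h: "B i - A * B (Suc i) = 0 \<cdot>\<^sub>m 1\<^sub>m k" using pr(4)[of "Suc i"] by simp
        have "B i = 0 \<cdot>\<^sub>m 1\<^sub>m k + A * B (Suc i)"
          by (rule mat_diff_eq[OF pr(1)[of i] _ h]) (use A pr(1)[of "Suc i"] in simp)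
        also have "\<dots> = 0\<^sub>m k k" using z right_mult_zero_mat[OF A, of k] by (auto intro!: eq_matI)
        finally show ?thesis .
      qed
    qed
  qed
  have B0: "B 0 = 0\<^sub>m k k" using Bz[of N] by auto
  have h: "E - A * B 0 = 0 \<cdot>\<^sub>m 1\<^sub>m k" using pr(4)[of 0] by simp
  have "E = 0 \<cdot>\<^sub>m 1\<^sub>m k + A * B 0"
    by (rule mat_diff_eq[OF pr(2) _ h]) (use A pr(1) in simp)
  also have "\<dots> = 0\<^sub>m k k" using B0 right_mult_zero_mat[OF A, of k] by (auto intro!: eq_matI)
  finally show ?case using A by (simp add: mev_0)
next
  case (pCons a p)
  have IH: "mev p A = B 0"
  proof (rule pCons.IH[of "\<lambda>i. B (Suc i)" "B 0"])
    show "\<And>i. B (Suc i) \<in> carrier_mat k k" using pCons.prems(1) .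
    show "B 0 \<in> carrier_mat k k" using pCons.prems(1) .
    show "\<And>i. N \<le> i \<Longrightarrow> B (Suc i) = 0\<^sub>m k k" using pCons.prems(3) by simp
    fix i
    have "(if i = 0 then B 0 else B (Suc (i - 1))) = B i" by simp
    then show "(if i = 0 then B 0 else B (Suc (i - 1))) - A * B (Suc i) = coeff p i \<cdot>\<^sub>m 1\<^sub>m k"
      using pCons.prems(4)[of "Suc i"] by simp
  qed
  have h: "E - A * B 0 = a \<cdot>\<^sub>m 1\<^sub>m k" using pCons.prems(4)[of 0] by simp
  have "E = a \<cdot>\<^sub>m 1\<^sub>m k + A * B 0"
    by (rule mat_diff_eq[OF pCons.prems(2) _ h]) (use A pCons.prems(1) in simp)
  then show ?case using A IH by (simp add: mev_pCons)
qed

lemma coeff_X_mult: "coeff ([:0,1:] * q) i = (if i = 0 then 0 else coeff q (i - 1))"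
  for q :: "'a::comm_ring_1 poly"
  by (cases i) (simp_all add: coeff_pCons)

lemma cayley_hamilton:
  fixes A :: "'a::field mat"
  assumes A: "A \<in> carrier_mat k k"
  shows "mev (char_poly A) A = 0\<^sub>m k k"
proof -
  define P where "P = char_poly_matrix A"
  define Q where "Q = adj_mat P"
  have P: "P \<in> carrier_mat k k" using A unfolding P_def by simp
  have Q: "Q \<in> carrier_mat k k" using adj_mat(1)[OF P] unfolding Q_def .
  have PQ: "P * Q = char_poly A \<cdot>\<^sub>m 1\<^sub>m k" using adj_mat(2)[OF P] unfolding Q_def P_def char_poly_def by simp
  define B where "B = (\<lambda>i. mat k k (\<lambda>(a,b). coeff (Q $$ (a,b)) i))"
  define N where "N = Suc (Max ((\<lambda>(a,b). degree (Q $$ (a,b))) ` ({..<k} \<times> {..<k})))"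
  have Bc: "B i \<in> carrier_mat k k" for i unfolding B_def by simp
  have BN: "B i = 0\<^sub>m k k" if "i \<ge> N" for i
  proof (rule eq_matI)
    fix a b assume ab: "a < dim_row (0\<^sub>m k k :: 'a mat)" "b < dim_col (0\<^sub>m k k :: 'a mat)"
    then have "degree (Q $$ (a,b)) \<le> Max ((\<lambda>(a,b). degree (Q $$ (a,b))) ` ({..<k} \<times> {..<k}))"
      by (intro Max_ge) auto
    then have "degree (Q $$ (a,b)) < i" using that unfolding N_def by simp
    then show "B i $$ (a,b) = 0\<^sub>m k k $$ (a,b)" using ab unfolding B_def by (simp add: coeff_eq_0)
  qed (auto simp: B_def)
  have key: "(if i = 0 then 0\<^sub>m k k else B (i - 1)) - A * B i = coeff (char_poly A) i \<cdot>\<^sub>m 1\<^sub>m k" for i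
  proof (rule eq_matI)
    fix a b assume "a < dim_row (coeff (char_poly A) i \<cdot>\<^sub>m 1\<^sub>m k)" "b < dim_col (coeff (char_poly A) i \<cdot>\<^sub>m (1\<^sub>m k :: 'a mat))"
    then have ab: "a < k" "b < k" by auto
    have e1: "(P * Q) $$ (a,b) = (\<Sum>l = 0..<k. P $$ (a,l) * Q $$ (l,b))"
      using P Q ab by (auto simp: scalar_prod_def intro!: sum.cong)
    have e2: "P $$ (a,l) = (if a = l then [:0,1:] else 0) + [:- A $$ (a,l):]" if "l < k" for l
      using A ab that unfolding P_def char_poly_matrix_def by simp
    have "coeff ((P * Q) $$ (a,b)) i = (\<Sum>l = 0..<k. coeff (P $$ (a,l) * Q $$ (l,b)) i)"
      by (simp add: e1 coeff_sum)
    also have "\<dots> = (\<Sum>l = 0..<k. (if a = l then (if i = 0 then 0 else coeff (Q $$ (l,b)) (i - 1)) else 0)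
         - A $$ (a,l) * coeff (Q $$ (l,b)) i)"
      by (intro sum.cong refl) (auto simp: e2 distrib_right coeff_pCons split: nat.split)
    also have "\<dots> = (if i = 0 then 0 else coeff (Q $$ (a,b)) (i - 1)) - (\<Sum>l = 0..<k. A $$ (a,l) * coeff (Q $$ (l,b)) i)"
      using ab by (simp add: sum_subtractf)
    finally have e3: "coeff ((P * Q) $$ (a,b)) i = (if i = 0 then 0 else coeff (Q $$ (a,b)) (i - 1)) - (\<Sum>l = 0..<k. A $$ (a,l) * coeff (Q $$ (l,b)) i)" .
    have e4: "coeff ((P * Q) $$ (a,b)) i = coeff (char_poly A) i * (if a = b then 1 else 0)"
      using ab by (simp add: PQ)
    have e5: "(A * B i) $$ (a,b) = (\<Sum>l = 0..<k. A $$ (a,l) * coeff (Q $$ (l,b)) i)"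
      using A ab by (auto simp: scalar_prod_def B_def intro!: sum.cong)
    show "((if i = 0 then 0\<^sub>m k k else B (i - 1)) - A * B i) $$ (a,b) = (coeff (char_poly A) i \<cdot>\<^sub>m 1\<^sub>m k) $$ (a,b)"
      using ab A e3 e4 e5 by (auto simp: B_def)
  qed (use A Bc in auto)
  show ?thesis
    by (rule CH_aux[OF A, of B "0\<^sub>m k k" N]) (use Bc BN key in auto)
qed

lemma mat_cancel_left:
  fixes J X Y :: "'a::field mat"
  assumes J: "J \<in> carrier_mat k k" and d: "det J \<noteq> 0"
    and X: "X \<in> carrier_mat k k" and Y: "Y \<in> carrier_mat k k" and e: "J * X = J * Y"
  shows "X = Y"
proof -
  have aJ: "adj_mat J \<in> carrier_mat k k" and aJJ: "adj_mat J * J = det J \<cdot>\<^sub>m 1\<^sub>m k" using adj_mat[OF J] by auto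
  have "adj_mat J * (J * X) = adj_mat J * (J * Y)" using e by simp
  then have "(adj_mat J * J) * X = (adj_mat J * J) * Y" using aJ J X Y by simp
  then have "det J \<cdot>\<^sub>m X = det J \<cdot>\<^sub>m Y" using aJJ X Y
    by (simp add: mult_smult_assoc_mat[of _ k k])
  then show ?thesis
  proof (intro eq_matI)
    fix i j assume "det J \<cdot>\<^sub>m X = det J \<cdot>\<^sub>m Y" "i < dim_row Y" "j < dim_col Y"
    then have "(det J \<cdot>\<^sub>m X) $$ (i,j) = (det J \<cdot>\<^sub>m Y) $$ (i,j)" by simp
    then show "X $$ (i,j) = Y $$ (i,j)" using X Y d \<open>i < dim_row Y\<close> \<open>j < dim_col Y\<close> by simp
  qed (use X Y in auto)
qed

theorem corollary5p3:
  fixes A J :: "'a::{finite,field} mat" and M n :: nat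
  assumes "M \<ge> 2" and "n \<ge> 1"
    and "nondeg_alternating (2*n) J"
    and "A \<in> Sp_group (2*n) J"
    and "srim (char_poly A)" and "degree (char_poly A) = 2*n"
  shows "(\<exists>\<alpha>\<in>Sp_group (2*n) J. \<alpha> ^\<^sub>m M = A) \<longleftrightarrow> Mstar_power_srim M (char_poly A)"
proof -
  note Jna = assms(3) and ASp = assms(4) and fsrim = assms(5) and degf = assms(6)
  define m where "m = 2*n"
  define f where "f = char_poly A"
  let ?X = "[:0,1:] :: 'a poly"
  have m2: "m \<ge> 2" using assms(2) m_def by simp
  have m0: "m > 0" using m2 by simp
  have A: "A \<in> carrier_mat m m" and AJA: "transpose_mat A * J * A = J"
    using ASp unfolding Sp_group_def m_def by auto
  have J: "J \<in> carrier_mat m m" and detJ: "det J \<noteq> 0"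
    using Jna unfolding nondeg_alternating_def m_def by auto
  have At: "transpose_mat A \<in> carrier_mat m m" using A by simp
  have firr: "irreducible f" and fmon: "monic f" and fsr: "self_reciprocal f"
    using fsrim unfolding f_def srim_def by auto
  have degf': "degree f = m" using degf unfolding f_def m_def .
  have fA: "mev f A = 0\<^sub>m m m" unfolding f_def by (rule cayley_hamilton[OF A])
  have "coeff f 0 \<noteq> 0" using fsr unfolding self_reciprocal_def by simp
  then obtain s where s: "f dvd s * ?X - 1" using inv_X by blast
  define S where "S = mev s A"
  have Sc: "S \<in> carrier_mat m m" using A unfolding S_def by simp
  have SA: "S * A = 1\<^sub>m m"
  proof -
    have "mev (s * ?X) A = mev 1 A" by (rule mev_dvd_eq[OF A fA s])
    moreover have "mev (s * ?X) A = mev s A * mev ?X A" by (rule mev_mult[OF A])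
    ultimately show ?thesis using A by (simp add: mev_X mev_1 S_def)
  qed
  have AS: "A * S = 1\<^sub>m m" using SA mev_comm[OF A, of s ?X] A by (simp add: mev_X S_def)
  have ATJ: "transpose_mat A * J = J * S"
  proof -
    have "transpose_mat A * J = (transpose_mat A * J) * (A * S)" using AS At J by simp
    also have "\<dots> = (transpose_mat A * J * A) * S"
      using assoc_mult_mat[OF mult_carrier_mat[OF At J] A Sc] by simp
    also have "\<dots> = J * S" using AJA by simp
    finally show ?thesis .
  qed
  have inter: "mev p (transpose_mat A) * J = J * mev (pcompose p s) A" for p
    using mev_intertwine[OF At Sc J ATJ, of p] mev_pcompose[OF A, of p s] unfolding S_def by simp
  have Sp_iff: "transpose_mat (mev r A) * J * mev r A = J \<longleftrightarrow> f dvd pcompose r s * r - 1" for r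
  proof -
    have "transpose_mat (mev r A) * J * mev r A = J * mev (pcompose r s) A * mev r A"
      using inter[of r] mev_transpose[OF A, of r] by simp
    also have "\<dots> = J * mev (pcompose r s * r) A"
      using assoc_mult_mat[OF J mev_carrier[OF A] mev_carrier[OF A], of "pcompose r s" r] by (simp add: mev_mult[OF A])
    finally have e: "transpose_mat (mev r A) * J * mev r A = J * mev (pcompose r s * r) A" .
    show ?thesis
    proof
      assume "transpose_mat (mev r A) * J * mev r A = J"
      then have "J * mev (pcompose r s * r) A = J * mev 1 A" using e J A by (simp add: mev_1)
      then have "mev (pcompose r s * r) A = mev 1 A" by (rule mat_cancel_left[OF J detJ mev_carrier[OF A] mev_carrier[OF A]])
      then show "f dvd pcompose r s * r - 1" by (rule mev_kernel[OF A m0 firr fA])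
    next
      assume "f dvd pcompose r s * r - 1"
      then have "mev (pcompose r s * r) A = mev 1 A" by (rule mev_dvd_eq[OF A fA])
      then show "transpose_mat (mev r A) * J * mev r A = J" using e J A by (simp add: mev_1)
    qed
  qed
  have pow_iff: "mev r A ^\<^sub>m M = A \<longleftrightarrow> f dvd r ^ M - ?X" for r
  proof -
    have e: "mev r A ^\<^sub>m M = mev (r ^ M) A" using mev_power[OF A] by simp
    show ?thesis
    proof
      assume "mev r A ^\<^sub>m M = A"
      then have "mev (r ^ M) A = mev ?X A" using e A by (simp add: mev_X)
      then show "f dvd r ^ M - ?X" by (rule mev_kernel[OF A m0 firr fA])
    next
      assume "f dvd r ^ M - ?X"
      then have "mev (r ^ M) A = mev ?X A" by (rule mev_dvd_eq[OF A fA])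
      then show "mev r A ^\<^sub>m M = A" using e A by (simp add: mev_X)
    qed
  qed
  show ?thesis
  proof
    assume "\<exists>\<alpha>\<in>Sp_group (2*n) J. \<alpha> ^\<^sub>m M = A"
    then obtain \<alpha> where \<alpha>: "\<alpha> \<in> carrier_mat m m" and \<alpha>J: "transpose_mat \<alpha> * J * \<alpha> = J"
      and \<alpha>M: "\<alpha> ^\<^sub>m M = A" unfolding Sp_group_def m_def by auto
    define \<chi> where "\<chi> = char_poly \<alpha>"
    have \<chi>\<alpha>: "mev \<chi> \<alpha> = 0\<^sub>m m m" unfolding \<chi>_def by (rule cayley_hamilton[OF \<alpha>])
    have deg\<chi>: "degree \<chi> = m" and mon\<chi>: "monic \<chi>"
      using degree_monic_char_poly[OF \<alpha>] unfolding \<chi>_def by auto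
    have XM\<alpha>: "mev (monom 1 M) \<alpha> = A"
      using \<alpha>M \<alpha> by (simp add: monom_altdef mev_power mev_X)
    define Pd where "Pd = {p :: 'a poly. degree p < m}"
    have finPd: "finite Pd" unfolding Pd_def by (rule finite_deg_less)
    have sub: "(\<lambda>p. mev p A) ` Pd \<subseteq> (\<lambda>p. mev p \<alpha>) ` Pd"
    proof
      fix B assume "B \<in> (\<lambda>p. mev p A) ` Pd"
      then obtain p where p: "p \<in> Pd" "B = mev p A" by auto
      define q where "q = pcompose p (monom 1 M) mod \<chi>"
      have "degree q < m" unfolding q_def using mod_deg_less[of \<chi>] deg\<chi> m2 by simp
      moreover have "mev q \<alpha> = mev (pcompose p (monom 1 M)) \<alpha>"
        unfolding q_def by (rule mev_dvd_eq[OF \<alpha> \<chi>\<alpha> dvd_mod_diff])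
      moreover have "mev (pcompose p (monom 1 M)) \<alpha> = mev p A"
        using mev_pcompose[OF \<alpha>] XM\<alpha> by simp
      ultimately have "q \<in> Pd" "B = mev q \<alpha>" using p unfolding Pd_def by auto
      then show "B \<in> (\<lambda>p. mev p \<alpha>) ` Pd" by blast
    qed
    have inj: "inj_on (\<lambda>p. mev p A) Pd"
    proof (rule inj_onI)
      fix p q assume pq: "p \<in> Pd" "q \<in> Pd" "mev p A = mev q A"
      then have "f dvd p - q" by (intro mev_kernel[OF A m0 firr fA])
      then show "p = q" using pq degf' eq_of_dvd_deg unfolding Pd_def by blast
    qed
    have "card ((\<lambda>p. mev p \<alpha>) ` Pd) \<le> card Pd" using finPd by (rule card_image_le)
    also have "\<dots> = card ((\<lambda>p. mev p A) ` Pd)" using inj by (simp add: card_image)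
    finally have eqS: "(\<lambda>p. mev p A) ` Pd = (\<lambda>p. mev p \<alpha>) ` Pd"
      using finPd sub by (intro card_seteq) auto
    have "?X \<in> Pd" using m2 unfolding Pd_def by simp
    moreover have "mev ?X \<alpha> = \<alpha>" by (rule mev_X[OF \<alpha>])
    ultimately have "\<alpha> \<in> (\<lambda>p. mev p A) ` Pd" using eqS by (metis image_eqI)
    then obtain r where r\<alpha>: "\<alpha> = mev r A" by auto
    have rM: "f dvd r ^ M - ?X" using pow_iff[of r] \<alpha>M r\<alpha> by simp
    have rs: "f dvd pcompose r s * r - 1" using Sp_iff[of r] \<alpha>J r\<alpha> by simp
    have gr: "f dvd pcompose \<chi> r"
    proof -
      have "mev (pcompose \<chi> r) A = mev 0 A"
        using mev_pcompose[OF A, of \<chi> r] r\<alpha> \<chi>\<alpha> A by (simp add: mev_0)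
      then have "f dvd pcompose \<chi> r - 0" by (rule mev_kernel[OF A m0 firr fA])
      then show ?thesis by simp
    qed
    have "srim \<chi> \<and> \<chi> dvd pcompose f (monom 1 M)"
      by (rule forward_poly[OF firr degf' m2 fsr s rM rs mon\<chi> deg\<chi> gr])
    then show "Mstar_power_srim M (char_poly A)"
      unfolding Mstar_power_srim_def using fsrim degf assms(2) deg\<chi> m_def f_def by auto
  next
    assume "Mstar_power_srim M (char_poly A)"
    then obtain g where gs: "srim g" and degg: "degree g = m" and gdvd: "g dvd pcompose f (monom 1 M)"
      unfolding Mstar_power_srim_def f_def m_def using degf by auto
    have girr: "irreducible g" and gsr: "self_reciprocal g" using gs unfolding srim_def by auto
    obtain r where rM: "f dvd r ^ M - ?X" and rs: "f dvd pcompose r s * r - 1"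
      using backward_poly[OF firr degf' girr degg m2 gsr gdvd s] by blast
    have "mev r A \<in> Sp_group (2*n) J"
      using Sp_iff[of r] rs A unfolding Sp_group_def m_def by simp
    moreover have "mev r A ^\<^sub>m M = A" using pow_iff[of r] rM by simp
    ultimately show "\<exists>\<alpha>\<in>Sp_group (2*n) J. \<alpha> ^\<^sub>m M = A" by blast
  qed
qed

end
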